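(* Consider the online optimization problem with multi-step memory cost described in the context. Assume that for every $t$ the hitting cost $f(\cdot,y_t):\mathcal X\to\mathbb R$ is $\alpha$-polyhedral for some $\alpha>0$, and let $\beta=\sum_{i=1}^q\|C_i\|$, where $\|C_i\|$ is the matrix norm induced by the $l_p$ vector norm. Then the algorithm Robust, which chooses $x_t=\arg\min_{x\in\mathcal X}f(x,y_t)$ for every $t=1,\dots,T$, satisfies for every input $\bm s$ $$\mathrm{cost}(\mathrm{Robust},\bm s)\le \max\!\left(\tfrac{\beta+1}{\alpha},1\right)\mathrm{cost}(\mathrm{OPT},\bm s).$$
   Context: Problem: Let $\mathcal X\subseteq\mathbb R^d$, $\mathcal Y\subseteq\mathbb R^m$, $f:\mathcal X\times\mathcal Y\to[0,\infty)$, $\|\cdot\|$ the $l_p$ norm on $\mathbb R^d$ ($p\ge1$), a memory length $q\ge1$ and matrices $C_1,\dots,C_q\in\mathbb R^{d\times d}$. An instance $\bm s$ consists of given initial actions $x_{1-q},\dots,x_0\in\mathcal X$ (shared by all algorithms) and contexts $y_1,\dots,y_T\in\mathcal Y$. At each step $t$ the context $y_t$ is revealed and an online algorithm irrevocably chooses $x_t\in\mathcal X$. The memory cost is $d(x_t,x_{t-q:t-1})=\|x_t-\sum_{i=1}^q C_i x_{t-i}\|$ and the total cost of an algorithm is $\sum_{t=1}^T f(x_t,y_t)+d(x_t,x_{t-q:t-1})$. $\mathrm{cost}(\mathrm{OPT},\bm s)$ is the optimal offline cost, i.e. the infimum of this total cost over all $x_1,\dots,x_T\in\mathcal X$ with all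 contexts known in advance. $\alpha$-polyhedral: $f(\cdot,y)$ has a unique minimizer $x^*\in\mathcal X$ and $f(x,y)-f(x^*,y)\ge\alpha\|x-x^*\|$ for all $x\in\mathcal X$. *)

theory Defs
  imports "HOL-Analysis.Analysis"
begin

definition lp_norm :: "real \<Rightarrow> real^'n \<Rightarrow> real" where
  "lp_norm p x = (\<Sum>i\<in>UNIV. \<bar>x $ i\<bar> powr p) powr (1 / p)"

definition induced_norm :: "real \<Rightarrow> real^'n^'n \<Rightarrow> real" where
  "induced_norm p A = Sup ((\<lambda>x. lp_norm p (A *v x) / lp_norm p x) ` {x. x \<noteq> 0})"

definition polyhedral :: "(real^'n) set \<Rightarrow> real \<Rightarrow> real \<Rightarrow> (real^'n \<Rightarrow> real) \<Rightarrow> bool" where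
  "polyhedral X p \<alpha> g \<longleftrightarrow>
     (\<exists>!xs. xs \<in> X \<and> (\<forall>x\<in>X. g xs \<le> g x)) \<and>
     (\<forall>xs\<in>X. (\<forall>x\<in>X. g xs \<le> g x) \<longrightarrow> (\<forall>x\<in>X. g x - g xs \<ge> \<alpha> * lp_norm p (x - xs)))"

text \<open>Total cost over steps 1..T of an action sequence x (indexed by int; x t for
  t \<in> {1-q..0} are the initial actions).\<close>
definition total_cost ::
  "(real^'n \<Rightarrow> 'y \<Rightarrow> real) \<Rightarrow> real \<Rightarrow> nat \<Rightarrow> (nat \<Rightarrow> real^'n^'n) \<Rightarrow> nat
    \<Rightarrow> (int \<Rightarrow> 'y) \<Rightarrow> (int \<Rightarrow> real^'n) \<Rightarrow> real" where
  "total_cost f p q C T y x =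
     (\<Sum>t\<in>{1..int T}. f (x t) (y t)
        + lp_norm p (x t - (\<Sum>i\<in>{1..q}. C i *v x (t - int i))))"

definition feasible :: "(real^'n) set \<Rightarrow> nat \<Rightarrow> nat \<Rightarrow> (int \<Rightarrow> real^'n) \<Rightarrow> (int \<Rightarrow> real^'n) \<Rightarrow> bool" where
  "feasible X q T x0 x \<longleftrightarrow> (\<forall>t\<in>{1 - int q..0}. x t = x0 t) \<and> (\<forall>t\<in>{1..int T}. x t \<in> X)"

definition opt_cost where
  "opt_cost X f p q C T y x0 = Inf (total_cost f p q C T y ` {x. feasible X q T x0 x})"

definition robust :: "(real^'n) set \<Rightarrow> (real^'n \<Rightarrow> 'y \<Rightarrow> real) \<Rightarrow> (int \<Rightarrow> 'y) \<Rightarrow> (int \<Rightarrow> real^'n) \<Rightarrow> int \<Rightarrow> real^'n" where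
  "robust X f y x0 t = (if t \<le> 0 then x0 t else (THE xs. xs \<in> X \<and> (\<forall>x\<in>X. f xs (y t) \<le> f x (y t))))"

end

theory Submission
  imports Defs
begin

lemma cvx_powr:
  fixes u w l p :: real
  assumes p: "p \<ge> 1" and u: "u \<ge> 0" and w: "w \<ge> 0" and l: "0 \<le> l" "l \<le> 1"
  shows "(l * u + (1 - l) * w) powr p \<le> l * u powr p + (1 - l) * w powr p"
proof -
  have key: "c powr p \<le> c" if "0 \<le> c" "c \<le> 1" for c :: real
    using that p powr_le_one_le[of c p] by (cases "c = 0") auto
  show ?thesis
  proof (cases "u = 0")
    case True
    have "(l * u + (1 - l) * w) powr p = (1 - l) powr p * w powr p"
      using True l w by (simp add: powr_mult)
    also have "\<dots> \<le> (1 - l) * w powr p"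
      by (rule mult_right_mono) (use key l in auto)
    finally show ?thesis using True l p by simp
  next
    case u0: False
    show ?thesis
    proof (cases "w = 0")
      case True
      have "(l * u + (1 - l) * w) powr p = l powr p * u powr p"
        using True l u by (simp add: powr_mult)
      also have "\<dots> \<le> l * u powr p"
        by (rule mult_right_mono) (use key l in auto)
      finally show ?thesis using True l p by simp
    next
      case False
      have "convex_on {0<..} (\<lambda>x. x powr p)" using powr_convex p by blast
      from convex_onD[OF this, of l w u] False u0 u w l
      show ?thesis by (simp add: algebra_simps)
    qed
  qed
qed

lemma lp_norm_nonneg: "lp_norm p x \<ge> 0"
  unfolding lp_norm_def by simp

lemma lp_norm_pow:
  assumes p: "p \<ge> 1"
  shows "lp_norm p x powr p = (\<Sum>i\<in>UNIV. \<bar>x $ i\<bar> powr p)"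
  using p unfolding lp_norm_def by (simp add: powr_powr sum_nonneg)

lemma lp_norm_zero_iff:
  assumes p: "p \<ge> 1"
  shows "lp_norm p x = 0 \<longleftrightarrow> x = 0"
proof
  assume "lp_norm p x = 0"
  then have "(\<Sum>i\<in>UNIV. \<bar>x $ i\<bar> powr p) = 0"
    using lp_norm_pow[OF p, of x] p by simp
  then have "\<forall>i. \<bar>x $ i\<bar> powr p = 0"
    by (subst (asm) sum_nonneg_eq_0_iff) auto
  then show "x = 0" by (simp add: vec_eq_iff)
next
  assume "x = 0" then show "lp_norm p x = 0" unfolding lp_norm_def by simp
qed

lemma lp_norm_uminus: "lp_norm p (- x) = lp_norm p x"
  unfolding lp_norm_def by simp

lemma lp_norm_triangle:
  fixes a b :: "real^'n"
  assumes p: "p \<ge> 1"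
  shows "lp_norm p (a + b) \<le> lp_norm p a + lp_norm p b"
proof (cases "a = 0 \<or> b = 0")
  case True then show ?thesis using lp_norm_nonneg by auto
next
  case False
  define A where "A = lp_norm p a"
  define B where "B = lp_norm p b"
  have A: "A > 0" using False lp_norm_zero_iff[OF p, of a] lp_norm_nonneg[of p a] unfolding A_def by linarith
  have B: "B > 0" using False lp_norm_zero_iff[OF p, of b] lp_norm_nonneg[of p b] unfolding B_def by linarith
  define s where "s = A + B"
  define l where "l = A / s"
  have s: "s > 0" using A B s_def by simp
  have l: "0 \<le> l" "l \<le> 1" "1 - l = B / s" using A B s unfolding l_def s_def by (auto simp: field_simps)
  have Ap: "A powr p = (\<Sum>i\<in>UNIV. \<bar>a $ i\<bar> powr p)" using lp_norm_pow[OF p] A_def by simp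
  have Bp: "B powr p = (\<Sum>i\<in>UNIV. \<bar>b $ i\<bar> powr p)" using lp_norm_pow[OF p] B_def by simp
  have pt: "(\<bar>(a + b) $ i\<bar> / s) powr p \<le> l * (\<bar>a $ i\<bar> / A) powr p + (1 - l) * (\<bar>b $ i\<bar> / B) powr p" for i
  proof -
    have "\<bar>(a + b) $ i\<bar> / s \<le> (\<bar>a $ i\<bar> + \<bar>b $ i\<bar>) / s"
      using s by (intro divide_right_mono) (auto simp: abs_triangle_ineq)
    also have "\<dots> = l * (\<bar>a $ i\<bar> / A) + (1 - l) * (\<bar>b $ i\<bar> / B)"
    proof -
      have "l * (\<bar>a $ i\<bar> / A) = \<bar>a $ i\<bar> / s" using A unfolding l_def by simp
      moreover have "(1 - l) * (\<bar>b $ i\<bar> / B) = \<bar>b $ i\<bar> / s" using l(3) B by simp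
      ultimately show ?thesis by (simp add: add_divide_distrib)
    qed
    finally have "(\<bar>(a + b) $ i\<bar> / s) powr p \<le> (l * (\<bar>a $ i\<bar> / A) + (1 - l) * (\<bar>b $ i\<bar> / B)) powr p"
      using p s by (intro powr_mono2) auto
    also have "\<dots> \<le> l * (\<bar>a $ i\<bar> / A) powr p + (1 - l) * (\<bar>b $ i\<bar> / B) powr p"
      using A B l p by (intro cvx_powr) auto
    finally show ?thesis .
  qed
  have "(\<Sum>i\<in>UNIV. \<bar>(a + b) $ i\<bar> powr p) / s powr p = (\<Sum>i\<in>UNIV. (\<bar>(a + b) $ i\<bar> / s) powr p)"
    by (simp add: powr_divide sum_divide_distrib)
  also have "\<dots> \<le> (\<Sum>i\<in>UNIV. l * (\<bar>a $ i\<bar> / A) powr p + (1 - l) * (\<bar>b $ i\<bar> / B) powr p)"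
    by (rule sum_mono) (rule pt)
  also have "\<dots> = l * ((\<Sum>i\<in>UNIV. \<bar>a $ i\<bar> powr p) / A powr p) + (1 - l) * ((\<Sum>i\<in>UNIV. \<bar>b $ i\<bar> powr p) / B powr p)"
    using A B by (simp add: powr_divide sum.distrib sum_distrib_left sum_divide_distrib)
  also have "\<dots> = 1"
    using A B by (simp only: Ap[symmetric] Bp[symmetric], simp)
  finally have "(\<Sum>i\<in>UNIV. \<bar>(a + b) $ i\<bar> powr p) \<le> s powr p"
    using s by (simp add: divide_le_eq)
  then have "(\<Sum>i\<in>UNIV. \<bar>(a + b) $ i\<bar> powr p) powr (1/p) \<le> (s powr p) powr (1/p)"
    using p by (intro powr_mono2) (auto intro: sum_nonneg)
  then show ?thesis
    using s p unfolding lp_norm_def A_def B_def s_def by (simp add: powr_powr)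
qed

lemma lp_norm_sum:
  assumes p: "p \<ge> 1" and fin: "finite I"
  shows "lp_norm p (\<Sum>i\<in>I. g i :: real^'n) \<le> (\<Sum>i\<in>I. lp_norm p (g i))"
  using fin
proof (induction I rule: finite_induct)
  case empty then show ?case using lp_norm_zero_iff[OF p, of "0::real^'n"] by simp
next
  case (insert i I)
  then show ?case using lp_norm_triangle[OF p, of "g i" "\<Sum>i\<in>I. g i"] by simp
qed

lemma lp_norm_coord:
  assumes p: "p \<ge> 1"
  shows "\<bar>x $ j\<bar> \<le> lp_norm p x"
proof -
  have "\<bar>x $ j\<bar> powr p \<le> (\<Sum>i\<in>UNIV. \<bar>x $ i\<bar> powr p)"
    by (rule member_le_sum) auto
  then have "(\<bar>x $ j\<bar> powr p) powr (1/p) \<le> (\<Sum>i\<in>UNIV. \<bar>x $ i\<bar> powr p) powr (1/p)"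
    using p by (intro powr_mono2) auto
  then show ?thesis using p unfolding lp_norm_def by (simp add: powr_powr)
qed

lemma lp_norm_bound:
  assumes p: "p \<ge> 1" and K: "K \<ge> 0" and b: "\<And>i. \<bar>w $ i\<bar> \<le> K"
  shows "lp_norm p (w::real^'n) \<le> real CARD('n) powr (1/p) * K"
proof -
  have "(\<Sum>i\<in>UNIV. \<bar>w $ i\<bar> powr p) \<le> (\<Sum>i\<in>(UNIV::'n set). K powr p)"
    using p b by (intro sum_mono powr_mono2) auto
  then have "(\<Sum>i\<in>UNIV. \<bar>w $ i\<bar> powr p) powr (1/p) \<le> (real CARD('n) * K powr p) powr (1/p)"
    using p by (intro powr_mono2) (auto intro: sum_nonneg)
  also have "\<dots> = real CARD('n) powr (1/p) * K"
    using p K by (simp add: powr_mult powr_powr)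
  finally show ?thesis unfolding lp_norm_def .
qed

lemma induced_norm_bound:
  fixes M :: "real^'n^'n"
  assumes p: "p \<ge> 1"
  shows "lp_norm p (M *v v) \<le> induced_norm p M * lp_norm p v \<and> induced_norm p M \<ge> 0"
proof -
  define c where "c = (\<Sum>i\<in>UNIV. \<Sum>j\<in>UNIV. \<bar>M $ i $ j\<bar>)"
  have c0: "c \<ge> 0" unfolding c_def by (intro sum_nonneg) auto
  have bnd: "lp_norm p (M *v x) \<le> real CARD('n) powr (1/p) * (c * lp_norm p x)" for x
  proof (rule lp_norm_bound[OF p])
    show "c * lp_norm p x \<ge> 0" using c0 lp_norm_nonneg[of p x] by simp
    fix i
    have "\<bar>(M *v x) $ i\<bar> = \<bar>\<Sum>j\<in>UNIV. M $ i $ j * x $ j\<bar>" by (simp add: matrix_vector_mult_def)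
    also have "\<dots> \<le> (\<Sum>j\<in>UNIV. \<bar>M $ i $ j\<bar> * \<bar>x $ j\<bar>)"
      by (rule order_trans[OF sum_abs]) (simp add: abs_mult)
    also have "\<dots> \<le> (\<Sum>j\<in>UNIV. \<bar>M $ i $ j\<bar> * lp_norm p x)"
      by (intro sum_mono mult_left_mono lp_norm_coord[OF p]) auto
    also have "\<dots> = (\<Sum>j\<in>UNIV. \<bar>M $ i $ j\<bar>) * lp_norm p x"
      by (simp add: sum_distrib_right)
    also have "\<dots> \<le> c * lp_norm p x"
      unfolding c_def
      by (intro mult_right_mono lp_norm_nonneg member_le_sum[where f="\<lambda>i. \<Sum>j\<in>UNIV. \<bar>M $ i $ j\<bar>"]) (auto intro: sum_nonneg)
    finally show "\<bar>(M *v x) $ i\<bar> \<le> c * lp_norm p x" .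
  qed
  let ?R = "(\<lambda>x. lp_norm p (M *v x) / lp_norm p x) ` {x. x \<noteq> 0}"
  have bdd: "bdd_above ?R"
  proof (rule bdd_aboveI2)
    fix x :: "real^'n" assume "x \<in> {x. x \<noteq> 0}"
    then have "lp_norm p x > 0" using lp_norm_zero_iff[OF p, of x] lp_norm_nonneg[of p x] by auto
    then show "lp_norm p (M *v x) / lp_norm p x \<le> real CARD('n) powr (1/p) * c"
      using bnd[of x] by (simp add: divide_le_eq mult.assoc)
  qed
  have up: "lp_norm p (M *v x) / lp_norm p x \<le> induced_norm p M" if "x \<noteq> 0" for x
    unfolding induced_norm_def using that by (intro cSup_upper bdd) auto
  have "(1::real^'n) \<noteq> 0" by (simp add: vec_eq_iff)
  then have nn: "induced_norm p M \<ge> 0"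
    using up[of 1] by (meson divide_nonneg_nonneg lp_norm_nonneg order_trans)
  show ?thesis
  proof (cases "v = 0")
    case True then show ?thesis using nn lp_norm_zero_iff[OF p, of "0::real^'n"] by simp
  next
    case False
    then have "lp_norm p v > 0" using lp_norm_zero_iff[OF p, of v] lp_norm_nonneg[of p v] by auto
    then show ?thesis using up[OF False] nn by (simp add: divide_le_eq mult.commute)
  qed
qed

theorem theorem2:
  fixes X :: "(real^'n) set" and Y :: "(real^'m) set"
    and f :: "real^'n \<Rightarrow> real^'m \<Rightarrow> real"
    and p \<alpha> :: real and q T :: nat and C :: "nat \<Rightarrow> real^'n^'n"
    and x0 :: "int \<Rightarrow> real^'n" and y :: "int \<Rightarrow> real^'m"
  assumes f_nonneg: "\<And>x v. x \<in> X \<Longrightarrow> v \<in> Y \<Longrightarrow> f x v \<ge> 0"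
    and p: "p \<ge> 1" and q: "q \<ge> 1" and alpha: "\<alpha> > 0"
    and x0: "\<And>t. t \<in> {1 - int q..0} \<Longrightarrow> x0 t \<in> X"
    and y: "\<And>t. t \<in> {1..int T} \<Longrightarrow> y t \<in> Y"
    and poly: "\<And>t. t \<in> {1..int T} \<Longrightarrow> polyhedral X p \<alpha> (\<lambda>x. f x (y t))"
  shows "total_cost f p q C T y (robust X f y x0)
    \<le> max (((\<Sum>i\<in>{1..q}. induced_norm p (C i)) + 1) / \<alpha>) 1 * opt_cost X f p q C T y x0"
proof -
  define r where "r = robust X f y x0"
  define beta where "beta = (\<Sum>i\<in>{1..q}. induced_norm p (C i))"
  define G where "G = (beta + 1) / \<alpha>"
  define M where "M = max G 1"
  have ind0: "induced_norm p (C i) \<ge> 0" for i using induced_norm_bound[OF p] by blast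
  have beta0: "beta \<ge> 0" unfolding beta_def using ind0 by (intro sum_nonneg) auto
  have G0: "G \<ge> 0" unfolding G_def using beta0 alpha by simp
  have rneg: "r t = x0 t" if "t \<le> 0" for t using that unfolding r_def robust_def by simp
  have rmin: "r t \<in> X \<and> (\<forall>x\<in>X. f (r t) (y t) \<le> f x (y t))" if t: "t \<in> {1..int T}" for t
  proof -
    have "\<exists>!xs. xs \<in> X \<and> (\<forall>x\<in>X. f xs (y t) \<le> f x (y t))"
      using poly[OF t] unfolding polyhedral_def by simp
    from theI'[OF this] show ?thesis using t unfolding r_def robust_def by simp
  qed
  have rpoly: "f x (y t) - f (r t) (y t) \<ge> \<alpha> * lp_norm p (x - r t)" if t: "t \<in> {1..int T}" and x: "x \<in> X" for t x
    using poly[OF t] rmin[OF t] x unfolding polyhedral_def by blast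
  have rfeas: "feasible X q T x0 r"
    unfolding feasible_def using rneg rmin by auto
  have main: "total_cost f p q C T y r \<le> M * total_cost f p q C T y x" if xf: "feasible X q T x0 x" for x
  proof -
    have xinit: "x t = x0 t" if "t \<in> {1 - int q..0}" for t using xf that unfolding feasible_def by blast
    have xX: "x t \<in> X" if "t \<in> {1..int T}" for t using xf that unfolding feasible_def by blast
    define d where "d t = lp_norm p (x t - r t)" for t
    have d0: "d t \<ge> 0" for t unfolding d_def by (rule lp_norm_nonneg)
    have dinit: "d t = 0" if "t \<in> {1 - int q..0}" for t
      using that xinit[OF that] rneg[of t] lp_norm_zero_iff[OF p, of "0::real^'n"] unfolding d_def by simp
    define mx where "mx t = lp_norm p (x t - (\<Sum>i\<in>{1..q}. C i *v x (t - int i)))" for t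
    define mr where "mr t = lp_norm p (r t - (\<Sum>i\<in>{1..q}. C i *v r (t - int i)))" for t
    have memb: "mr t \<le> d t + mx t + (\<Sum>i\<in>{1..q}. induced_norm p (C i) * d (t - int i))" for t
    proof -
      have eq: "r t - (\<Sum>i\<in>{1..q}. C i *v r (t - int i)) =
          - (x t - r t) + ((x t - (\<Sum>i\<in>{1..q}. C i *v x (t - int i))) + (\<Sum>i\<in>{1..q}. C i *v (x (t - int i) - r (t - int i))))"
        by (simp add: matrix_vector_mult_diff_distrib sum_subtractf algebra_simps)
      have "mr t \<le> lp_norm p (- (x t - r t)) + lp_norm p ((x t - (\<Sum>i\<in>{1..q}. C i *v x (t - int i))) + (\<Sum>i\<in>{1..q}. C i *v (x (t - int i) - r (t - int i))))"
        unfolding mr_def eq by (rule lp_norm_triangle[OF p])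
      also have "\<dots> \<le> d t + (mx t + lp_norm p (\<Sum>i\<in>{1..q}. C i *v (x (t - int i) - r (t - int i))))"
        unfolding d_def mx_def lp_norm_uminus by (intro add_left_mono lp_norm_triangle[OF p])
      also have "lp_norm p (\<Sum>i\<in>{1..q}. C i *v (x (t - int i) - r (t - int i))) \<le> (\<Sum>i\<in>{1..q}. lp_norm p (C i *v (x (t - int i) - r (t - int i))))"
        by (rule lp_norm_sum[OF p]) simp
      also have "\<dots> \<le> (\<Sum>i\<in>{1..q}. induced_norm p (C i) * d (t - int i))"
        unfolding d_def using induced_norm_bound[OF p] by (intro sum_mono) blast
      finally show ?thesis by simp
    qed
    have shift: "(\<Sum>t\<in>{1..int T}. d (t - int i)) \<le> (\<Sum>t\<in>{1..int T}. d t)" if i: "i \<in> {1..q}" for i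
    proof -
      define A where "A = (\<lambda>t. t - int i) ` {1..int T}"
      have "(\<Sum>t\<in>{1..int T}. d (t - int i)) = (\<Sum>s\<in>A. d s)"
        unfolding A_def by (subst sum.reindex) (auto simp: inj_on_def)
      also have "\<dots> = (\<Sum>s\<in>A \<inter> {1..int T}. d s) + (\<Sum>s\<in>A - {1..int T}. d s)"
        unfolding A_def by (rule sum.Int_Diff) simp
      also have "(\<Sum>s\<in>A - {1..int T}. d s) = 0"
      proof (rule sum.neutral, rule ballI)
        fix s assume "s \<in> A - {1..int T}"
        then have "s \<in> {1 - int q..0}" using i unfolding A_def by auto
        then show "d s = 0" by (rule dinit)
      qed
      also have "(\<Sum>s\<in>A \<inter> {1..int T}. d s) \<le> (\<Sum>s\<in>{1..int T}. d s)"
        by (rule sum_mono2) (auto simp: d0)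
      finally show ?thesis by simp
    qed
    define D where "D = (\<Sum>t\<in>{1..int T}. d t)"
    define F where "F = (\<Sum>t\<in>{1..int T}. f (x t) (y t))"
    define Fr where "Fr = (\<Sum>t\<in>{1..int T}. f (r t) (y t))"
    define Mx where "Mx = (\<Sum>t\<in>{1..int T}. mx t)"
    have Mx0: "Mx \<ge> 0" unfolding Mx_def mx_def by (intro sum_nonneg lp_norm_nonneg)
    have Fr0: "Fr \<ge> 0" unfolding Fr_def using f_nonneg rmin y by (intro sum_nonneg) auto
    have FrF: "Fr \<le> F" unfolding Fr_def F_def using rmin xX by (intro sum_mono) auto
    have DF: "\<alpha> * D \<le> F - Fr"
      unfolding D_def F_def Fr_def d_def sum_distrib_left sum_subtractf[symmetric]
      using rpoly xX by (intro sum_mono) auto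
    have "(\<Sum>t\<in>{1..int T}. mr t) \<le> (\<Sum>t\<in>{1..int T}. d t + mx t + (\<Sum>i\<in>{1..q}. induced_norm p (C i) * d (t - int i)))"
      by (intro sum_mono memb)
    also have "\<dots> = D + Mx + (\<Sum>i\<in>{1..q}. induced_norm p (C i) * (\<Sum>t\<in>{1..int T}. d (t - int i)))"
      unfolding D_def Mx_def by (simp add: sum.distrib sum_distrib_left, rule sum.swap)
    also have "(\<Sum>i\<in>{1..q}. induced_norm p (C i) * (\<Sum>t\<in>{1..int T}. d (t - int i))) \<le> (\<Sum>i\<in>{1..q}. induced_norm p (C i) * D)"
      unfolding D_def by (rule sum_mono, rule mult_left_mono) (use shift ind0 in auto)
    also have "\<dots> = beta * D" unfolding beta_def by (simp add: sum_distrib_right)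
    finally have Mr: "(\<Sum>t\<in>{1..int T}. mr t) \<le> (1 + beta) * D + Mx" by (simp add: algebra_simps)
    have costr: "total_cost f p q C T y r = Fr + (\<Sum>t\<in>{1..int T}. mr t)"
      unfolding total_cost_def Fr_def mr_def by (simp add: sum.distrib)
    have costx: "total_cost f p q C T y x = F + Mx"
      unfolding total_cost_def F_def Mx_def mx_def by (simp add: sum.distrib)
    have "(1 + beta) * D \<le> G * (F - Fr)"
    proof -
      have "(1 + beta) * (\<alpha> * D) \<le> (1 + beta) * (F - Fr)" using DF beta0 by (intro mult_left_mono) auto
      then show ?thesis unfolding G_def using alpha by (simp add: field_simps)
    qed
    then have "total_cost f p q C T y r \<le> Fr + G * (F - Fr) + Mx" using costr Mr by linarith
    also have "\<dots> \<le> M * (F + Mx)"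
    proof (cases "G \<ge> 1")
      case True
      then have "Fr + G * (F - Fr) \<le> G * F" using Fr0 mult_left_mono[of 1 G Fr] by (simp add: algebra_simps)
      moreover have "Mx \<le> G * Mx" using True Mx0 by (simp add: mult_right_mono[of 1 G Mx, simplified])
      ultimately show ?thesis unfolding M_def using True by (simp add: max_def algebra_simps)
    next
      case False
      then have "G * (F - Fr) \<le> 1 * (F - Fr)" using FrF by (intro mult_right_mono) auto
      then show ?thesis unfolding M_def using False by simp
    qed
    finally show ?thesis using costx by simp
  qed
  have M1: "M \<ge> 1" unfolding M_def by simp
  have "total_cost f p q C T y r / M \<le> opt_cost X f p q C T y x0"
    unfolding opt_cost_def
  proof (rule cInf_greatest)
    show "total_cost f p q C T y ` {x. feasible X q T x0 x} \<noteq> {}" using rfeas by auto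
    fix c assume "c \<in> total_cost f p q C T y ` {x. feasible X q T x0 x}"
    then obtain x where "feasible X q T x0 x" "c = total_cost f p q C T y x" by auto
    then show "total_cost f p q C T y r / M \<le> c" using main M1 by (simp add: divide_le_eq mult.commute)
  qed
  then show ?thesis using M1 unfolding M_def G_def beta_def r_def by (simp add: divide_le_eq mult.commute)
qed

end
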